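(* Let $h_2,h_4,h_5$ and $\psi_2,\psi_4,\psi_5$ be as in the context. Then: (i)(a) $h_2(x)\ge h_5(x)\ge h_4(x)$ for all $x\ge0$; (i)(b) $h_2^{-1}(y)\le h_5^{-1}(y)\le h_4^{-1}(y)$ for all $y\ge 0$. (ii)(a) $h_2(x)\ge (x/2)\log(1+x)\ge (x/2)\log(1+x/2)$ for all $x\ge0$; (ii)(b) $h_4(x)\ge (x/2)\log(1+x/2)$ for all $x\ge0$; (ii)(c) $h_5(x)\ge (x/2)\log(1+x/2)$ for all $x\ge 0$. (iii)(a) $h_2(x)\sim x^2/2$ as $x\searrow0$ and $h_2(x)\sim x\log x$ as $x\to\infty$; (iii)(b) $h_4(x)\sim x^2/4$ as $x\searrow0$ and $h_4(x)\sim \frac12 x\log x$ as $x\to\infty$; (iii)(c) $h_5(x)\sim x^2/4$ as $x\searrow 0$ and $h_5(x)\sim x\log x$ as $x\to\infty$; (iii)(d) $h_2(x)-h_4(x)\sim x^2/4$ as $x\searrow0$ and $h_2(x)-h_4(x)\sim\frac12x\log x$ as $x\to\infty$; (iii)(e) $h_2(x)-h_5(x)\sim x^2/4$ as $x\searrow 0$ and $h_2(x)-h_5(x)\sim\log x$ as $x\to\infty$. (iv)(a) For $x>0$, $\psi_2(x)\ge x^{-1}\log(1+x)$ and $\psi_2(x)\ge (1+x/3)^{-1}$. (iv)(b) For $x>0$, $\psi_4(x)\ge 2x^{-1}\log(1+x/2)$ and $\psi_4(x)\ge \frac{1/2}{1+x/2}$; moreover for every $\delta\in(0,1/2)$, $\psi_4(x)\ge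 \frac{1-\delta}{1+x/2}$ whenever $0<x\le 2\delta^{1/2}/(1/2-\delta)^{1/2}$. (iv)(c) For $x>0$, $\psi_5(x)\ge 2x^{-1}\log(1+x/2)$ and $\psi_5(x)\ge \frac{1}{1+x/2}$.
   Context: For $x\ge0$: $h_2(x)=(1+x)\log(1+x)-x$ (Bennett); $h_4(x)=(x/2)\,\mathrm{arcsinh}(x/2)=(x/2)\log\big(x/2+\sqrt{1+(x/2)^2}\big)$ (Prokhorov); $h_5(x)=x\,\mathrm{arcsinh}(x/2)-2\big(\cosh(\mathrm{arcsinh}(x/2))-1\big)$ (Kruglov). Each is an increasing bijection of $[0,\infty)$ onto itself, with inverses $h_2^{-1},h_4^{-1},h_5^{-1}$. For $x>0$ define $\psi_2,\psi_4,\psi_5$ by $h_2(x)=\frac{x^2}{2}\psi_2(x)$, $h_4(x)=\frac{x^2}{4}\psi_4(x)$, $h_5(x)=\frac{x^2}{4}\psi_5(x)$. Here $f\sim g$ means $f/g\to1$. *)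

theory Defs
  imports "HOL-Analysis.Analysis" "HOL-Library.Landau_Symbols"
begin

definition h2 :: "real \<Rightarrow> real" where
  "h2 x = (1 + x) * ln (1 + x) - x"

definition h4 :: "real \<Rightarrow> real" where
  "h4 x = (x / 2) * arsinh (x / 2)"

definition h5 :: "real \<Rightarrow> real" where
  "h5 x = x * arsinh (x / 2) - 2 * (cosh (arsinh (x / 2)) - 1)"

text \<open>Inverses of the increasing bijections of [0,inf) onto itself.\<close>
definition h2inv :: "real \<Rightarrow> real" where "h2inv = the_inv_into {0..} h2"
definition h4inv :: "real \<Rightarrow> real" where "h4inv = the_inv_into {0..} h4"
definition h5inv :: "real \<Rightarrow> real" where "h5inv = the_inv_into {0..} h5"

text \<open>psi functions, defined for x > 0 by h2 x = x^2/2 psi2 x, h4 x = x^2/4 psi4 x, h5 x = x^2/4 psi5 x.\<close>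
definition psi2 :: "real \<Rightarrow> real" where "psi2 x = 2 * h2 x / x^2"
definition psi4 :: "real \<Rightarrow> real" where "psi4 x = 4 * h4 x / x^2"
definition psi5 :: "real \<Rightarrow> real" where "psi5 x = 4 * h5 x / x^2"

end

theory Submission
  imports Defs "HOL-Real_Asymp.Real_Asymp"
begin

lemma deriv_ge:
  fixes f g f' g' :: "real \<Rightarrow> real"
  assumes df: "\<And>t. t \<ge> 0 \<Longrightarrow> (f has_real_derivative f' t) (at t)"
    and dg: "\<And>t. t \<ge> 0 \<Longrightarrow> (g has_real_derivative g' t) (at t)"
    and le: "\<And>t. t > 0 \<Longrightarrow> g' t \<le> f' t"
    and z: "g 0 \<le> f 0" and x: "x \<ge> 0"
  shows "g x \<le> f x"
proof -
  have "(\<lambda>t. f t - g t) 0 \<le> (\<lambda>t. f t - g t) x"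
  proof (rule DERIV_nonneg_imp_increasing_open[of 0 x "\<lambda>t. f t - g t", OF x])
    fix t assume "0 < t" "t < x"
    then show "\<exists>y. ((\<lambda>t. f t - g t) has_real_derivative y) (at t) \<and> 0 \<le> y"
      using df[of t] dg[of t] le[of t] by (intro exI[of _ "f' t - g' t"]) (auto intro!: derivative_eq_intros)
  next
    show "continuous_on {0..x} (\<lambda>t. f t - g t)"
      using df dg by (intro continuous_at_imp_continuous_on ballI continuous_intros)
        (auto intro: DERIV_isCont)
  qed
  then show ?thesis using z by simp
qed

lemma strict_mono_deriv:
  fixes f f' :: "real \<Rightarrow> real"
  assumes df: "\<And>t. t \<ge> 0 \<Longrightarrow> (f has_real_derivative f' t) (at t)"
    and pos: "\<And>t. t > 0 \<Longrightarrow> f' t > 0"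
  shows "strict_mono_on {0..} f"
proof (rule strict_mono_onI)
  fix a b :: real assume ab: "a \<in> {0..}" "b \<in> {0..}" "a < b"
  define m where "m = (a+b)/2"
  have m: "a < m" "m < b" "m > 0" using ab by (auto simp: m_def)
  have "f a \<le> f m"
  proof (rule DERIV_nonneg_imp_increasing_open[of a m f])
    show "a \<le> m" using m by simp
  next
    fix t assume "a < t" "t < m"
    then show "\<exists>y. (f has_real_derivative y) (at t) \<and> 0 \<le> y"
      using df[of t] pos[of t] ab by (intro exI[of _ "f' t"]) auto
  next
    show "continuous_on {a..m} f"
    proof (intro continuous_at_imp_continuous_on ballI)
      fix t assume "t \<in> {a..m}"
      then have "t \<ge> 0" using ab by auto
      then show "isCont f t" using df DERIV_isCont by blast
    qed
  qed
  also have "f m < f b"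
  proof (rule DERIV_pos_imp_increasing[OF m(2)])
    fix t assume "m \<le> t" "t \<le> b"
    then show "\<exists>y. (f has_real_derivative y) (at t) \<and> 0 < y"
      using df[of t] pos[of t] m by (intro exI[of _ "f' t"]) auto
  qed
  finally show "f a < f b" .
qed

lemma inv_cmp:
  fixes f g :: "real \<Rightarrow> real"
  assumes smf: "strict_mono_on {0..} f" and smg: "strict_mono_on {0..} g"
    and cf: "continuous_on {0..} f" and cg: "continuous_on {0..} g"
    and f0: "f 0 = 0" and g0: "g 0 = 0"
    and le: "\<And>x. x \<ge> 0 \<Longrightarrow> g x \<le> f x"
    and big: "\<And>y. y \<ge> 0 \<Longrightarrow> \<exists>X\<ge>0. g X \<ge> y"
    and y: "y \<ge> 0"
  shows "the_inv_into {0..} f y \<le> the_inv_into {0..} g y"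
proof -
  obtain X where X: "X \<ge> 0" "g X \<ge> y" using big[OF y] by auto
  have injf: "inj_on f {0..}" using smf by (rule strict_mono_on_imp_inj_on)
  have injg: "inj_on g {0..}" using smg by (rule strict_mono_on_imp_inj_on)
  have "\<exists>x. 0 \<le> x \<and> x \<le> X \<and> g x = y"
    using X y g0 by (intro IVT') (auto intro: continuous_on_subset[OF cg])
  then have yg: "y \<in> g ` {0..}" by auto
  have "\<exists>x. 0 \<le> x \<and> x \<le> X \<and> f x = y"
    using X y f0 le[OF X(1)] by (intro IVT') (auto intro: continuous_on_subset[OF cf])
  then have yf: "y \<in> f ` {0..}" by auto
  define a where "a = the_inv_into {0..} f y"
  define b where "b = the_inv_into {0..} g y"
  have a: "a \<ge> 0" "f a = y" using the_inv_into_into[OF injf yf, of "{0..}"] f_the_inv_into_f[OF injf yf]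
    by (auto simp: a_def)
  have b: "b \<ge> 0" "g b = y" using the_inv_into_into[OF injg yg, of "{0..}"] f_the_inv_into_f[OF injg yg]
    by (auto simp: b_def)
  show ?thesis unfolding a_def[symmetric] b_def[symmetric]
  proof (rule ccontr)
    assume "\<not> a \<le> b"
    then have "f b < f a" using smf a b by (auto simp: strict_mono_on_def)
    moreover have "f b \<ge> y" using le[OF b(1)] b by simp
    ultimately show False using a by simp
  qed
qed

lemma h5_alt: "h5 x = x * arsinh (x/2) - 2 * (sqrt ((x/2)^2 + 1) - 1)"
  unfolding h5_def cosh_arsinh_real by simp

lemma arsinh_half_deriv: "((\<lambda>x. arsinh (x/2)) has_real_derivative (1/(2 * sqrt((x/2)^2+1)))) (at x)"
proof -
  have "((\<lambda>x. arsinh (x/2)) has_real_derivative (1/sqrt((x/2)^2+1)) * (1/2)) (at x)"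
    by (rule DERIV_chain2[where f=arsinh]) (auto intro!: derivative_eq_intros)
  then show ?thesis by (simp add: mult.commute)
qed

lemma h2_deriv: "x \<ge> 0 \<Longrightarrow> (h2 has_real_derivative ln (1 + x)) (at x)"
  unfolding h2_def[abs_def] by (auto intro!: derivative_eq_intros)

lemma h5_deriv: "(h5 has_real_derivative arsinh (x/2)) (at x)"
  unfolding h5_alt[abs_def]
  apply (auto intro!: derivative_eq_intros arsinh_half_deriv simp: field_simps)
  using zero_le_power2[of x] by linarith+

lemma h4_deriv: "(h4 has_real_derivative (arsinh (x/2) / 2 + (x/4) / sqrt ((x/2)^2+1))) (at x)"
  unfolding h4_def[abs_def]
  by (auto intro!: derivative_eq_intros arsinh_half_deriv simp: field_simps)

lemma ln_lb2: fixes x :: real assumes "x \<ge> 0" shows "2*x/(2+x) \<le> ln (1+x)"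
proof (rule deriv_ge[OF _ _ _ _ assms, where f'="\<lambda>t. 1/(1+t)" and g'="\<lambda>t. 4/(2+t)^2"])
  fix t :: real assume "t \<ge> 0"
  then show "((\<lambda>t. ln (1+t)) has_real_derivative 1/(1+t)) (at t)"
    by (auto intro!: derivative_eq_intros)
  show "((\<lambda>t. 2*t/(2+t)) has_real_derivative 4/(2+t)^2) (at t)"
    using \<open>t \<ge> 0\<close> by (auto intro!: derivative_eq_intros simp: field_simps power2_eq_square)
next
  fix t :: real assume t: "t > 0"
  have "4*(1+t) \<le> (2+t)^2" by (simp add: power2_eq_square algebra_simps)
  then show "4/(2+t)^2 \<le> 1/(1+t)" using t by (simp add: field_simps)
qed simp

lemma ln_lb1: fixes x :: real assumes "x \<ge> 0" shows "x/(1+x) \<le> ln (1+x)"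
proof -
  have "x/(1+x) \<le> 2*x/(2+x)" using assms by (simp add: field_simps)
  then show ?thesis using ln_lb2[OF assms] by linarith
qed

lemma arsinh_ge_ln: fixes t :: real assumes "t \<ge> 0" shows "ln (1+t) \<le> arsinh t"
proof -
  have "1 \<le> sqrt (t^2+1)" by simp
  then show ?thesis unfolding arsinh_real_def using assms arsinh_real_aux[of t] by (subst ln_le_cancel_iff) auto
qed

lemma arsinh_ge2: fixes x :: real assumes "x \<ge> 0" shows "x \<le> arsinh x * sqrt (x^2+1)"
proof (rule deriv_ge[OF _ _ _ _ assms, where f'="\<lambda>t. 1 + arsinh t * t / sqrt (t^2+1)" and g'="\<lambda>t. 1"])
  fix t :: real assume "t \<ge> 0"
  have "0 < t^2+1" by (simp add: add_nonneg_pos)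
  then show "((\<lambda>t. arsinh t * sqrt (t^2+1)) has_real_derivative 1 + arsinh t * t / sqrt (t^2+1)) (at t)"
    by (auto intro!: derivative_eq_intros simp: field_simps)
  show "((\<lambda>t. t) has_real_derivative 1) (at t)" by (rule DERIV_ident)
next
  fix t :: real assume t: "t > 0"
  have "0 < arsinh t" using t by simp
  then have "0 \<le> arsinh t * t / sqrt (t^2+1)" using t by (intro divide_nonneg_nonneg mult_nonneg_nonneg) (auto simp del: arsinh_real_pos_iff)
  then show "1 \<le> 1 + arsinh t * t / sqrt (t^2+1)" by linarith
qed simp

lemma h2_ge_h5: fixes x :: real assumes "x \<ge> 0" shows "h5 x \<le> h2 x"
proof (rule deriv_ge[OF h2_deriv h5_deriv _ _ assms])
  fix t :: real assume t: "t > 0"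
  have "sqrt ((t/2)^2+1) \<le> sqrt ((1+t/2)^2)"
    by (rule real_sqrt_le_mono) (use t in \<open>simp add: power2_eq_square algebra_simps\<close>)
  also have "\<dots> = 1 + t/2" using t by simp
  finally have "t/2 + sqrt ((t/2)^2+1) \<le> 1 + t" by simp
  then show "arsinh (t/2) \<le> ln (1+t)" unfolding arsinh_real_def
    using arsinh_real_aux[of "t/2"] by (subst ln_le_cancel_iff) auto
next
  show "h5 0 \<le> h2 0" unfolding h5_alt h2_def by simp
qed

lemma h5_ge_h4: fixes x :: real assumes "x \<ge> 0" shows "h4 x \<le> h5 x"
proof (rule deriv_ge[OF h5_deriv h4_deriv _ _ assms])
  fix t :: real assume t: "t > 0"
  have s: "sqrt ((t/2)^2+1) > 0" by (simp add: add_nonneg_pos)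
  have "t/2 \<le> arsinh (t/2) * sqrt ((t/2)^2+1)" using arsinh_ge2[of "t/2"] t by simp
  then have "(t/4) / sqrt ((t/2)^2+1) \<le> arsinh (t/2) / 2" using s by (simp add: field_simps)
  then show "arsinh (t/2) / 2 + (t/4) / sqrt ((t/2)^2+1) \<le> arsinh (t/2)" by linarith
qed (simp add: h4_def h5_def)

lemma h4_ge_ln: fixes x :: real assumes "x \<ge> 0" shows "(x/2) * ln (1 + x/2) \<le> h4 x"
  unfolding h4_def using assms arsinh_ge_ln[of "x/2"] by (intro mult_left_mono) auto

lemma h2_ge_ln: fixes x :: real assumes "x \<ge> 0" shows "(x/2) * ln (1 + x) \<le> h2 x"
proof -
  have "2*x/(2+x) \<le> ln (1+x)" using ln_lb2[OF assms] .
  then have "2*x \<le> ln (1+x) * (2+x)" using assms by (simp add: divide_le_eq)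
  then show ?thesis unfolding h2_def by (simp add: algebra_simps)
qed

lemma h4_lb: fixes x :: real assumes "x \<ge> 0" shows "x^2/(4+2*x) \<le> h4 x"
proof -
  have "(x/2)/(1+x/2) \<le> ln (1+x/2)" using ln_lb1[of "x/2"] assms by simp
  then have "(x/2) * ((x/2)/(1+x/2)) \<le> (x/2) * ln (1+x/2)" using assms by (intro mult_left_mono) auto
  also have "(x/2) * ((x/2)/(1+x/2)) = x^2/(4+2*x)" using assms by (simp add: field_simps power2_eq_square)
  finally show ?thesis using h4_ge_ln[OF assms] by linarith
qed

lemma h2_lb: fixes x :: real assumes "x \<ge> 0" shows "3*x^2/(6+2*x) \<le> h2 x"
proof (rule deriv_ge[OF h2_deriv _ _ _ assms, where g'="\<lambda>t. 3*t*(6+t)/(2*(3+t)^2)"])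
  fix t :: real assume t: "t \<ge> 0"
  then show "((\<lambda>x. 3*x^2/(6+2*x)) has_real_derivative 3*t*(6+t)/(2*(3+t)^2)) (at t)"
    apply (auto intro!: derivative_eq_intros simp: field_simps power2_eq_square)
    apply (subst frac_eq_eq)
    using t by (auto simp: algebra_simps add_nonneg_eq_0_iff)
next
  fix t :: real assume t: "t > 0"
  have "3*(6+t)*(2+t) \<le> 4*(3+t)^2" by (simp add: power2_eq_square algebra_simps)
  then have "t*(3*(6+t)*(2+t)) \<le> t*(4*(3+t)^2)" using t by (intro mult_left_mono) auto
  then have key: "3*t*(6+t)*(2+t) \<le> 2*t*(2*(3+t)^2)" by (simp add: algebra_simps)
  have p1: "0 < 2*(3+t)^2" using t by simp
  have p2: "0 < 2+t" using t by simp
  have "3*t*(6+t)/(2*(3+t)^2) \<le> 2*t/(2+t)"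
    using key p1 p2 by (simp add: divide_le_eq le_divide_eq mult.commute mult.left_commute)
  then show "3*t*(6+t)/(2*(3+t)^2) \<le> ln (1+t)" using ln_lb2[of t] t by linarith
next
  show "3 * 0^2 / (6 + 2 * 0) \<le> h2 0" unfolding h2_def by simp
qed

lemma h5_altA: "h5 x = x * ln (x/2 + sqrt (x^2/4+1)) - 2 * (sqrt (x^2/4 + 1) - 1)"
  unfolding h5_def cosh_arsinh_real unfolding arsinh_real_def by (simp add: power_divide)
lemma h5_altB: "h5 x = x * ln (x/2 + sqrt ((x/2)^2+1)) - 2 * (sqrt ((x/2)^2 + 1) - 1)"
  unfolding h5_def cosh_arsinh_real unfolding arsinh_real_def by simp
lemma h4_altA: "h4 x = (x/2) * ln (x/2 + sqrt (x^2/4+1))"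
  by (simp add: h4_def arsinh_real_def power_divide)
lemma h4_altB: "h4 x = (x/2) * ln (x/2 + sqrt ((x/2)^2+1))"
  by (simp add: h4_def arsinh_real_def)

lemma as1: "h2 \<sim>[at_right 0] (\<lambda>x. x^2 / 2)" unfolding h2_def by real_asymp
lemma as2: "h2 \<sim>[at_top] (\<lambda>x. x * ln x)" unfolding h2_def by real_asymp
lemma as3: "h4 \<sim>[at_right 0] (\<lambda>x. x^2 / 4)" unfolding h4_altA by real_asymp
lemma as4: "h4 \<sim>[at_top] (\<lambda>x. (1/2) * x * ln x)" unfolding h4_altB by real_asymp
lemma as5: "h5 \<sim>[at_right 0] (\<lambda>x. x^2 / 4)" unfolding h5_altA by real_asymp
lemma as6: "h5 \<sim>[at_top] (\<lambda>x. x * ln x)" unfolding h5_altB by real_asymp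
lemma as7: "(\<lambda>x. h2 x - h4 x) \<sim>[at_right 0] (\<lambda>x. x^2 / 4)" unfolding h4_altA h2_def by real_asymp
lemma as8: "(\<lambda>x. h2 x - h4 x) \<sim>[at_top] (\<lambda>x. (1/2) * x * ln x)" unfolding h4_altB h2_def by real_asymp
lemma as9: "(\<lambda>x. h2 x - h5 x) \<sim>[at_right 0] (\<lambda>x. x^2 / 4)" unfolding h5_altA h2_def by real_asymp
lemma as10: "(\<lambda>x. h2 x - h5 x) \<sim>[at_top] (\<lambda>x. ln x)" unfolding h5_altB h2_def by real_asymp

lemma cont_of_deriv: assumes "\<And>t. t \<ge> 0 \<Longrightarrow> (f has_real_derivative f' t) (at t)"
  shows "continuous_on {0..} f"
proof (intro continuous_at_imp_continuous_on ballI)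
  fix t :: real assume "t \<in> {0..}"
  then show "isCont f t" using assms DERIV_isCont by auto
qed

lemma sm2: "strict_mono_on {0..} h2"
  by (rule strict_mono_deriv[OF h2_deriv]) (auto intro: ln_gt_zero)
lemma sm5: "strict_mono_on {0..} h5"
  by (rule strict_mono_deriv[OF h5_deriv]) simp
lemma sm4: "strict_mono_on {0..} h4"
proof (rule strict_mono_deriv[OF h4_deriv])
  fix t :: real assume t: "t > 0"
  have "0 \<le> (t/4) / sqrt ((t/2)^2+1)" using t by simp
  moreover have "arsinh (t/2) > 0" using t by simp
  ultimately show "arsinh (t/2) / 2 + (t/4) / sqrt ((t/2)^2+1) > 0" by linarith
qed

lemma big4: fixes y :: real assumes "y \<ge> 0" shows "\<exists>X\<ge>0. y \<le> h4 X"
proof (intro exI conjI)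
  show "0 \<le> 2*y+2" using assms by simp
  have "y \<le> (2*y+2)^2/(4+2*(2*y+2))" using assms by (simp add: field_simps power2_eq_square)
  also have "\<dots> \<le> h4 (2*y+2)" by (rule h4_lb) (use assms in simp)
  finally show "y \<le> h4 (2*y+2)" .
qed

lemma big5: fixes y :: real assumes "y \<ge> 0" shows "\<exists>X\<ge>0. y \<le> h5 X"
  using big4[OF assms] h5_ge_h4 by (meson order_trans)

lemma h0: "h2 0 = 0" "h4 0 = 0" "h5 0 = 0"
  by (simp_all add: h2_def h4_def h5_alt)

theorem lemma11:
  shows "((\<forall>x::real. x \<ge> 0 \<longrightarrow> h2 x \<ge> h5 x \<and> h5 x \<ge> h4 x)) \<and>
    ((\<forall>y::real. y \<ge> 0 \<longrightarrow> h2inv y \<le> h5inv y \<and> h5inv y \<le> h4inv y)) \<and>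
    ((\<forall>x::real. x \<ge> 0 \<longrightarrow> h2 x \<ge> (x/2) * ln (1 + x) \<and> (x/2) * ln (1 + x) \<ge> (x/2) * ln (1 + x/2))) \<and>
    ((\<forall>x::real. x \<ge> 0 \<longrightarrow> h4 x \<ge> (x/2) * ln (1 + x/2))) \<and>
    ((\<forall>x::real. x \<ge> 0 \<longrightarrow> h5 x \<ge> (x/2) * ln (1 + x/2))) \<and>
    (h2 \<sim>[at_right 0] (\<lambda>x. x^2 / 2)) \<and>
    (h2 \<sim>[at_top] (\<lambda>x. x * ln x)) \<and>
    (h4 \<sim>[at_right 0] (\<lambda>x. x^2 / 4)) \<and>
    (h4 \<sim>[at_top] (\<lambda>x. (1/2) * x * ln x)) \<and>
    (h5 \<sim>[at_right 0] (\<lambda>x. x^2 / 4)) \<and>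
    (h5 \<sim>[at_top] (\<lambda>x. x * ln x)) \<and>
    ((\<lambda>x. h2 x - h4 x) \<sim>[at_right 0] (\<lambda>x. x^2 / 4)) \<and>
    ((\<lambda>x. h2 x - h4 x) \<sim>[at_top] (\<lambda>x. (1/2) * x * ln x)) \<and>
    ((\<lambda>x. h2 x - h5 x) \<sim>[at_right 0] (\<lambda>x. x^2 / 4)) \<and>
    ((\<lambda>x. h2 x - h5 x) \<sim>[at_top] (\<lambda>x. ln x)) \<and>
    ((\<forall>x::real. x > 0 \<longrightarrow> psi2 x \<ge> ln (1 + x) / x \<and> psi2 x \<ge> 1 / (1 + x/3))) \<and>
    ((\<forall>x::real. x > 0 \<longrightarrow> psi4 x \<ge> 2 * ln (1 + x/2) / x \<and> psi4 x \<ge> (1/2) / (1 + x/2))) \<and>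
    ((\<forall>\<delta>::real. 0 < \<delta> \<and> \<delta> < 1/2 \<longrightarrow>
        (\<forall>x::real. 0 < x \<and> x \<le> 2 * sqrt \<delta> / sqrt (1/2 - \<delta>) \<longrightarrow>
            psi4 x \<ge> (1 - \<delta>) / (1 + x/2)))) \<and>
    ((\<forall>x::real. x > 0 \<longrightarrow> psi5 x \<ge> 2 * ln (1 + x/2) / x \<and> psi5 x \<ge> 1 / (1 + x/2)))"
proof -
  have i1: "\<forall>x::real. x \<ge> 0 \<longrightarrow> h2 x \<ge> h5 x \<and> h5 x \<ge> h4 x"
    using h2_ge_h5 h5_ge_h4 by blast
  have i2: "\<forall>y::real. y \<ge> 0 \<longrightarrow> h2inv y \<le> h5inv y \<and> h5inv y \<le> h4inv y"
  proof (intro allI impI conjI)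
    fix y :: real assume y: "y \<ge> 0"
    show "h2inv y \<le> h5inv y" unfolding h2inv_def h5inv_def
      by (rule inv_cmp[OF sm2 sm5 cont_of_deriv[OF h2_deriv] cont_of_deriv[OF h5_deriv] h0(1) h0(3) h2_ge_h5 big5 y])
    show "h5inv y \<le> h4inv y" unfolding h4inv_def h5inv_def
      by (rule inv_cmp[OF sm5 sm4 cont_of_deriv[OF h5_deriv] cont_of_deriv[OF h4_deriv] h0(3) h0(2) h5_ge_h4 big4 y])
  qed
  have ii1: "\<forall>x::real. x \<ge> 0 \<longrightarrow> h2 x \<ge> (x/2) * ln (1 + x) \<and> (x/2) * ln (1 + x) \<ge> (x/2) * ln (1 + x/2)"
    using h2_ge_ln by (auto intro!: mult_left_mono)
  have ii2: "\<forall>x::real. x \<ge> 0 \<longrightarrow> h4 x \<ge> (x/2) * ln (1 + x/2)"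
    using h4_ge_ln by blast
  have ii3: "\<forall>x::real. x \<ge> 0 \<longrightarrow> h5 x \<ge> (x/2) * ln (1 + x/2)"
    using h4_ge_ln h5_ge_h4 by (meson order_trans)
  have iva: "\<forall>x::real. x > 0 \<longrightarrow> psi2 x \<ge> ln (1 + x) / x \<and> psi2 x \<ge> 1 / (1 + x/3)"
  proof (intro allI impI conjI)
    fix x :: real assume x: "x > 0"
    have "ln (1+x) / x = 2 * ((x/2) * ln (1+x)) / x^2" using x by (simp add: power2_eq_square)
    also have "\<dots> \<le> 2 * h2 x / x^2" using h2_ge_ln[of x] x by (intro divide_right_mono) auto
    finally show "ln (1 + x) / x \<le> psi2 x" unfolding psi2_def .
    have "2 * (3*x^2/(6+2*x)) / x^2 = 6/(6+2*x)" using x by (simp add: power2_eq_square)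
    also have "\<dots> = 1 / (1 + x/3)" using x by (simp add: field_simps)
    finally have "1 / (1 + x/3) = 2 * (3*x^2/(6+2*x)) / x^2" by simp
    also have "\<dots> \<le> 2 * h2 x / x^2" using h2_lb[of x] x by (intro divide_right_mono) auto
    finally show "1 / (1 + x/3) \<le> psi2 x" unfolding psi2_def .
  qed
  have p4: "2 * ln (1 + x/2) / x \<le> psi4 x" "1 / (1 + x/2) \<le> psi4 x"
     "2 * ln (1 + x/2) / x \<le> psi5 x" "1 / (1 + x/2) \<le> psi5 x" if x: "x > 0" for x :: real
  proof -
    have e1: "2 * ln (1 + x/2) / x = 4 * ((x/2) * ln (1+x/2)) / x^2" using x by (simp add: power2_eq_square)
    have "4 * (x^2/(4+2*x)) / x^2 = 4/(4+2*x)" using x by (simp add: power2_eq_square)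
    also have "\<dots> = 1 / (1 + x/2)" using x by (simp add: field_simps)
    finally have e2: "1 / (1 + x/2) = 4 * (x^2/(4+2*x)) / x^2" by simp
    have h45: "h4 x \<le> h5 x" using h5_ge_h4[of x] x by simp
    show "2 * ln (1 + x/2) / x \<le> psi4 x" unfolding psi4_def e1
      using h4_ge_ln[of x] x by (intro divide_right_mono) auto
    show "1 / (1 + x/2) \<le> psi4 x" unfolding psi4_def e2
      using h4_lb[of x] x by (intro divide_right_mono) auto
    show "2 * ln (1 + x/2) / x \<le> psi5 x" unfolding psi5_def e1
      using h4_ge_ln[of x] h45 x by (intro divide_right_mono) auto
    show "1 / (1 + x/2) \<le> psi5 x" unfolding psi5_def e2
      using h4_lb[of x] h45 x by (intro divide_right_mono) auto
  qed
  have ivb: "\<forall>x::real. x > 0 \<longrightarrow> psi4 x \<ge> 2 * ln (1 + x/2) / x \<and> psi4 x \<ge> (1/2) / (1 + x/2)"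
  proof (intro allI impI conjI)
    fix x :: real assume x: "x > 0"
    show "2 * ln (1 + x/2) / x \<le> psi4 x" using p4 x by blast
    have "(1/2) / (1 + x/2) \<le> 1 / (1 + x/2)" using x by (intro divide_right_mono) auto
    then show "(1/2) / (1 + x/2) \<le> psi4 x" using p4(2)[OF x] by linarith
  qed
  have ivb2: "\<forall>\<delta>::real. 0 < \<delta> \<and> \<delta> < 1/2 \<longrightarrow>
        (\<forall>x::real. 0 < x \<and> x \<le> 2 * sqrt \<delta> / sqrt (1/2 - \<delta>) \<longrightarrow>
            psi4 x \<ge> (1 - \<delta>) / (1 + x/2))"
  proof (intro allI impI)
    fix \<delta> x :: real assume d: "0 < \<delta> \<and> \<delta> < 1/2" and x: "0 < x \<and> x \<le> 2 * sqrt \<delta> / sqrt (1/2 - \<delta>)"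
    have "(1 - \<delta>) / (1 + x/2) \<le> 1 / (1 + x/2)" using x d by (intro divide_right_mono) auto
    then show "(1 - \<delta>) / (1 + x/2) \<le> psi4 x" using p4(2)[of x] x by linarith
  qed
  have ivc: "\<forall>x::real. x > 0 \<longrightarrow> psi5 x \<ge> 2 * ln (1 + x/2) / x \<and> psi5 x \<ge> 1 / (1 + x/2)"
    using p4 by blast
  show ?thesis
    by (intro conjI i1 i2 ii1 ii2 ii3 as1 as2 as3 as4 as5 as6 as7 as8 as9 as10 iva ivb ivb2 ivc)
qed

end
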